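(* Let $G$ be a block graph with at least one edge and let $H$ be a maximal co-interval subgraph of $G$. Then there exist a block $Q$ of $G$ and vertices $u,v\in V(Q)$ (possibly $u=v$) such that $E(H)=E(Q_{u,v}(G))$.
   Context: All graphs are finite and simple. A block of a graph is a maximal connected subgraph that has no cut-vertex of its own; a block graph is a graph in which every block is complete. For a vertex $x$, $N_G(x)$ is its neighbourhood and $\delta_G(x)$ its set of incident edges. For a clique $Q$ in $G$ and $u,v\in V(Q)$, the big ant $Q_{u,v}(G)=\big(V(Q)\cup N_G(u)\cup N_G(v),\ E(Q)\cup\delta_G(u)\cup\delta_G(v)\big)$. A graph $H$ is co-interval if there is a map $I$ from $V(H)$ to closed real intervals with $xy\in E(H)$ iff $I(x)\cap I(y)=\emptyset$ for distinct $x,y$. A co-interval subgraph $H$ of $G$ is maximal if there is no co-interval subgraph $H'$ of $G$ with $E(H)\subsetneq E(H')$ (maximality refers only to edge sets; isolated vertices are disregarded). *)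

theory Defs
  imports Complex_Main
begin

type_synonym 'a graph = "'a set \<times> 'a set set"

definition verts :: "'a graph \<Rightarrow> 'a set" where "verts G = fst G"
definition edges :: "'a graph \<Rightarrow> 'a set set" where "edges G = snd G"

definition graph :: "'a graph \<Rightarrow> bool" where
  "graph G \<longleftrightarrow> finite (verts G) \<and>
     (\<forall>e\<in>edges G. \<exists>x y. x \<noteq> y \<and> e = {x, y} \<and> x \<in> verts G \<and> y \<in> verts G)"

definition subgraph :: "'a graph \<Rightarrow> 'a graph \<Rightarrow> bool" where
  "subgraph H G \<longleftrightarrow> graph H \<and> verts H \<subseteq> verts G \<and> edges H \<subseteq> edges G"

definition reachable :: "'a graph \<Rightarrow> 'a \<Rightarrow> 'a \<Rightarrow> bool" where
  "reachable G = (\<lambda>x y. {x, y} \<in> edges G)\<^sup>*\<^sup>*"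

definition connected :: "'a graph \<Rightarrow> bool" where
  "connected G \<longleftrightarrow> verts G \<noteq> {} \<and> (\<forall>x\<in>verts G. \<forall>y\<in>verts G. reachable G x y)"

definition delete_vertex :: "'a graph \<Rightarrow> 'a \<Rightarrow> 'a graph" where
  "delete_vertex G x = (verts G - {x}, {e \<in> edges G. x \<notin> e})"

text \<open>A cut-vertex: its removal increases the number of components, i.e. it separates two
  other vertices that were in the same component.\<close>
definition cut_vertex :: "'a graph \<Rightarrow> 'a \<Rightarrow> bool" where
  "cut_vertex G x \<longleftrightarrow> x \<in> verts G \<and>
     (\<exists>y\<in>verts G - {x}. \<exists>z\<in>verts G - {x}. reachable G y z \<and> \<not> reachable (delete_vertex G x) y z)"

definition biconn :: "'a graph \<Rightarrow> bool" where
  "biconn B \<longleftrightarrow> connected B \<and> (\<nexists>x. cut_vertex B x)"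

definition block :: "'a graph \<Rightarrow> 'a graph \<Rightarrow> bool" where
  "block G B \<longleftrightarrow> subgraph B G \<and> biconn B \<and>
     (\<forall>B'. subgraph B' G \<and> biconn B' \<and> verts B \<subseteq> verts B' \<and> edges B \<subseteq> edges B' \<longrightarrow> B' = B)"

definition complete :: "'a graph \<Rightarrow> bool" where
  "complete B \<longleftrightarrow> (\<forall>x\<in>verts B. \<forall>y\<in>verts B. x \<noteq> y \<longrightarrow> {x, y} \<in> edges B)"

definition block_graph :: "'a graph \<Rightarrow> bool" where
  "block_graph G \<longleftrightarrow> graph G \<and> (\<forall>B. block G B \<longrightarrow> complete B)"

definition nbhd :: "'a graph \<Rightarrow> 'a \<Rightarrow> 'a set" where
  "nbhd G x = {y. {x, y} \<in> edges G}"

definition incident :: "'a graph \<Rightarrow> 'a \<Rightarrow> 'a set set" where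
  "incident G x = {e \<in> edges G. x \<in> e}"

definition big_ant :: "'a graph \<Rightarrow> 'a graph \<Rightarrow> 'a \<Rightarrow> 'a \<Rightarrow> 'a graph" where
  "big_ant G Q u v = (verts Q \<union> nbhd G u \<union> nbhd G v, edges Q \<union> incident G u \<union> incident G v)"

definition co_interval :: "'a graph \<Rightarrow> bool" where
  "co_interval H \<longleftrightarrow> (\<exists>I :: 'a \<Rightarrow> real set.
     (\<forall>x\<in>verts H. \<exists>a b. a \<le> b \<and> I x = {a..b}) \<and>
     (\<forall>x\<in>verts H. \<forall>y\<in>verts H. x \<noteq> y \<longrightarrow> ({x, y} \<in> edges H \<longleftrightarrow> I x \<inter> I y = {})))"

definition max_co_interval_subgraph :: "'a graph \<Rightarrow> 'a graph \<Rightarrow> bool" where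
  "max_co_interval_subgraph G H \<longleftrightarrow> subgraph H G \<and> co_interval H \<and>
     (\<nexists>H'. subgraph H' G \<and> co_interval H' \<and> edges H \<subset> edges H')"

end

theory Submission
  imports Defs
begin

lemma reach_mono: "edges G1 \<subseteq> edges G2 \<Longrightarrow> reachable G1 x y \<Longrightarrow> reachable G2 x y"
  unfolding reachable_def
proof -
  assume s: "edges G1 \<subseteq> edges G2" and r: "(\<lambda>x y. {x, y} \<in> edges G1)\<^sup>*\<^sup>* x y"
  from r show "(\<lambda>x y. {x, y} \<in> edges G2)\<^sup>*\<^sup>* x y"
    by (induction rule: rtranclp_induct) (auto intro: rtranclp.rtrancl_into_rtrancl dest: subsetD[OF s])
qed

lemma reach_sym: "reachable G x y \<Longrightarrow> reachable G y x"
  unfolding reachable_def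
  apply (induction rule: rtranclp_induct)
   apply simp
  subgoal for y z
    by (rule converse_rtranclp_into_rtranclp[of _ z y]) (simp_all add: insert_commute)
  done

lemma reach_edge: "{x,y} \<in> edges G \<Longrightarrow> reachable G x y"
  unfolding reachable_def by auto

lemma reach_trans: "reachable G x y \<Longrightarrow> reachable G y z \<Longrightarrow> reachable G x z"
  unfolding reachable_def by auto

lemma reach_refl: "reachable G x x"
  unfolding reachable_def by auto

lemma edge_sub: "graph G \<Longrightarrow> e \<in> edges G \<Longrightarrow> e \<subseteq> verts G"
proof -
  assume g: "graph G" and e: "e \<in> edges G"
  then obtain x y where "e = {x,y}" "x \<in> verts G" "y \<in> verts G" unfolding graph_def by blast
  thus ?thesis by simp
qed

lemma biconn_extend:
  assumes bc: "biconn B" and gB: "graph B"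
    and sv: "verts B \<subseteq> verts B'" and se: "edges B \<subseteq> edges B'"
    and r1: "\<forall>w\<in>verts B'. \<exists>b\<in>verts B. reachable B' w b"
    and r2: "\<forall>z\<in>verts B'. \<forall>w\<in>verts B' - {z}. \<exists>b\<in>verts B - {z}. reachable (delete_vertex B' z) w b"
  shows "biconn B'"
proof -
  have cB: "connected B" using bc by (simp add: biconn_def)
  have nc: "\<not> cut_vertex B x" for x using bc by (simp add: biconn_def)
  have "connected B'"
    unfolding Defs.connected_def
  proof (intro conjI ballI)
    have "verts B \<noteq> {}" using cB unfolding Defs.connected_def by (rule conjunct1)
    thus "verts B' \<noteq> {}" using sv subset_empty by metis
    fix w1 w2 assume w: "w1 \<in> verts B'" "w2 \<in> verts B'"
    obtain b1 where b1: "b1 \<in> verts B" "reachable B' w1 b1" using r1 w by blast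
    obtain b2 where b2: "b2 \<in> verts B" "reachable B' w2 b2" using r1 w by blast
    have "reachable B b1 b2" using cB b1 b2 unfolding Defs.connected_def by auto
    hence "reachable B' b1 b2" by (rule reach_mono[OF se])
    hence "reachable B' w1 b2" by (rule reach_trans[OF b1(2)])
    thus "reachable B' w1 w2" by (rule reach_trans[OF _ reach_sym[OF b2(2)]])
  qed
  moreover have "\<not> cut_vertex B' z" for z
  proof
    assume "cut_vertex B' z"
    then obtain y1 y2 where z: "z \<in> verts B'" and y: "y1 \<in> verts B' - {z}" "y2 \<in> verts B' - {z}"
      and nr: "\<not> reachable (delete_vertex B' z) y1 y2"
      unfolding cut_vertex_def by blast
    obtain b1 where b1: "b1 \<in> verts B - {z}" "reachable (delete_vertex B' z) y1 b1" using r2 z y by blast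
    obtain b2 where b2: "b2 \<in> verts B - {z}" "reachable (delete_vertex B' z) y2 b2" using r2 z y by blast
    have rb: "reachable B b1 b2" using cB b1 b2 unfolding Defs.connected_def by auto
    have "reachable (delete_vertex B z) b1 b2"
    proof (cases "z \<in> verts B")
      case True
      have "\<not> (reachable B b1 b2 \<and> \<not> reachable (delete_vertex B z) b1 b2)"
        using nc[of z] True b1(1) b2(1) unfolding cut_vertex_def by blast
      then show ?thesis using rb by blast
    next
      case False
      have "\<forall>e\<in>edges B. z \<notin> e" using edge_sub[OF gB] False by blast
      hence "edges (delete_vertex B z) = edges B"
        unfolding delete_vertex_def by (auto simp: edges_def)
      then show ?thesis using rb by (simp add: reachable_def)
    qed
    moreover have "edges (delete_vertex B z) \<subseteq> edges (delete_vertex B' z)"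
      using se unfolding delete_vertex_def edges_def by auto
    ultimately have "reachable (delete_vertex B' z) b1 b2" by (rule reach_mono[rotated])
    hence "reachable (delete_vertex B' z) y1 b2" by (rule reach_trans[OF b1(2)])
    hence "reachable (delete_vertex B' z) y1 y2" by (rule reach_trans[OF _ reach_sym[OF b2(2)]])
    with nr show False by simp
  qed
  ultimately show ?thesis unfolding biconn_def by simp
qed

lemma finite_edges: "graph G \<Longrightarrow> finite (edges G)"
proof -
  assume g: "graph G"
  have "edges G \<subseteq> Pow (verts G)" using edge_sub[OF g] by blast
  moreover have "finite (Pow (verts G))" using g unfolding graph_def by simp
  ultimately show ?thesis by (rule finite_subset)
qed


lemma K2_biconn: "p \<noteq> q \<Longrightarrow> biconn ({p,q},{{p,q}})"
proof -
  assume pq: "p \<noteq> q"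
  have r1: "reachable ({p,q},{{p,q}}) p q" by (rule reach_edge) (simp add: edges_def)
  have r2: "reachable ({p,q},{{p,q}}) q p" by (rule reach_edge) (auto simp add: edges_def)
  have "connected ({p,q},{{p,q}})"
    unfolding Defs.connected_def verts_def by (simp add: r1 r2 reach_refl)
  moreover have "\<not> cut_vertex ({p,q},{{p,q}}) z" for z
    unfolding cut_vertex_def verts_def by (auto simp: reach_refl)
  ultimately show ?thesis unfolding biconn_def by simp
qed

lemma block_exists:
  assumes g: "graph G" and e: "{p,q} \<in> edges G" and pq: "p \<noteq> q"
  shows "\<exists>Q. block G Q \<and> p \<in> verts Q \<and> q \<in> verts Q"
proof -
  define P where "P B \<longleftrightarrow> subgraph B G \<and> biconn B \<and> p \<in> verts B \<and> q \<in> verts B" for B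
  define f where "f B = card (verts B) + card (edges B)" for B :: "'a graph"
  have vG: "p \<in> verts G" "q \<in> verts G" using edge_sub[OF g e] by auto
  have gK: "graph ({p,q},{{p,q}})"
    unfolding graph_def verts_def edges_def using pq by auto
  have "P ({p,q},{{p,q}})"
    unfolding P_def subgraph_def using K2_biconn[OF pq] e vG gK
    by (auto simp: verts_def edges_def)
  moreover have "\<forall>B. P B \<longrightarrow> f B < card (verts G) + card (edges G) + 1"
  proof (intro allI impI)
    fix B assume "P B"
    hence s: "verts B \<subseteq> verts G" "edges B \<subseteq> edges G" unfolding P_def subgraph_def by auto
    have "card (verts B) \<le> card (verts G)" using s g unfolding graph_def by (simp add: card_mono)
    moreover have "card (edges B) \<le> card (edges G)" using s finite_edges[OF g] by (simp add: card_mono)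
    ultimately show "f B < card (verts G) + card (edges G) + 1" unfolding f_def by simp
  qed
  ultimately obtain B where B: "P B" and mx: "\<forall>y. P y \<longrightarrow> f y \<le> f B"
    using ex_has_greatest_nat[of P _ f] by blast
  have "block G B"
    unfolding block_def
  proof (intro conjI allI impI)
    show "subgraph B G" "biconn B" using B unfolding P_def by auto
    fix B' assume h: "subgraph B' G \<and> biconn B' \<and> verts B \<subseteq> verts B' \<and> edges B \<subseteq> edges B'"
    hence PB': "P B'" using B unfolding P_def by auto
    hence le: "f B' \<le> f B" using mx by blast
    have gB': "graph B'" using h unfolding subgraph_def by auto
    have fin: "finite (verts B')" "finite (edges B')"
      using gB' finite_edges[OF gB'] unfolding graph_def by auto
    have c1: "card (verts B) \<le> card (verts B')" using h fin by (simp add: card_mono)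
    have c2: "card (edges B) \<le> card (edges B')" using h fin by (simp add: card_mono)
    have "card (verts B) = card (verts B')" "card (edges B) = card (edges B')"
      using le c1 c2 unfolding f_def by linarith+
    hence "verts B = verts B'" "edges B = edges B'" using h fin card_subset_eq by metis+
    thus "B' = B" unfolding verts_def edges_def by (simp add: prod_eq_iff)
  qed
  thus ?thesis using B unfolding P_def by blast
qed

lemma cycle_in_block:
  assumes g: "graph G" and bl: "block G Q" and pQ: "p \<in> verts Q" and qQ: "q \<in> verts Q"
    and d: "p \<noteq> q" "p \<noteq> x" "p \<noteq> y" "q \<noteq> x" "q \<noteq> y" "x \<noteq> y"
    and e: "{q,x} \<in> edges G" "{x,y} \<in> edges G" "{y,p} \<in> edges G"
  shows "{x,y} \<in> edges Q"
proof -
  define B' where "B' = (verts Q \<union> {x,y}, edges Q \<union> {{q,x},{x,y},{y,p}})"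
  have vB': "verts B' = verts Q \<union> {x,y}" and eB': "edges B' = edges Q \<union> {{q,x},{x,y},{y,p}}"
    unfolding B'_def verts_def edges_def by auto
  have sQ: "subgraph Q G" and bQ: "biconn Q" and mQ: "\<forall>B'. subgraph B' G \<and> biconn B' \<and> verts Q \<subseteq> verts B' \<and> edges Q \<subseteq> edges B' \<longrightarrow> B' = Q"
    using bl unfolding block_def by auto
  have gQ: "graph Q" using sQ unfolding subgraph_def by auto
  have xyG: "x \<in> verts G" "y \<in> verts G" using edge_sub[OF g e(2)] by auto
  have gB': "graph B'"
    unfolding graph_def vB' eB'
  proof (intro conjI ballI)
    show "finite (verts Q \<union> {x, y})" using gQ unfolding graph_def by simp
    fix e' assume "e' \<in> edges Q \<union> {{q, x}, {x, y}, {y, p}}"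
    thus "\<exists>a b. a \<noteq> b \<and> e' = {a, b} \<and> a \<in> verts Q \<union> {x, y} \<and> b \<in> verts Q \<union> {x, y}"
    proof
      assume "e' \<in> edges Q"
      then obtain a b where "a \<noteq> b" "e' = {a,b}" "a \<in> verts Q" "b \<in> verts Q"
        using gQ unfolding graph_def by blast
      thus ?thesis by (intro exI[of _ a] exI[of _ b]) auto
    next
      assume "e' \<in> {{q, x}, {x, y}, {y, p}}"
      hence "e' = {q,x} \<or> e' = {x,y} \<or> e' = {y,p}" by simp
      thus ?thesis
      proof (elim disjE)
        assume "e' = {q,x}" thus ?thesis using d qQ by (intro exI[of _ q] exI[of _ x]) auto
      next
        assume "e' = {x,y}" thus ?thesis using d by (intro exI[of _ x] exI[of _ y]) auto
      next
        assume "e' = {y,p}" thus ?thesis using d pQ by (intro exI[of _ y] exI[of _ p]) auto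
      qed
    qed
  qed
  have sB': "subgraph B' G"
    unfolding subgraph_def using gB' sQ e xyG unfolding subgraph_def vB' eB' by auto
  have "biconn B'"
  proof (rule biconn_extend[OF bQ gQ])
    show "verts Q \<subseteq> verts B'" "edges Q \<subseteq> edges B'" using vB' eB' by auto
    show "\<forall>w\<in>verts B'. \<exists>b\<in>verts Q. reachable B' w b"
    proof
      fix w assume "w \<in> verts B'"
      hence "w \<in> verts Q \<or> w = x \<or> w = y" using vB' by auto
      have rx: "reachable B' x q" using eB' by (intro reach_edge) (auto simp: insert_commute)
      have ry: "reachable B' y p" using eB' by (intro reach_edge) auto
      show "\<exists>b\<in>verts Q. reachable B' w b"
      proof (cases "w \<in> verts Q")
        case True thus ?thesis using reach_refl[of B' w] by (rule bexI[rotated])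
      next
        case False
        hence "w = x \<or> w = y" using \<open>w \<in> verts Q \<or> w = x \<or> w = y\<close> by simp
        thus ?thesis
        proof
          assume "w = x" thus ?thesis using rx qQ by (intro bexI[of _ q]) simp_all
        next
          assume "w = y" thus ?thesis using ry pQ by (intro bexI[of _ p]) simp_all
        qed
      qed
    qed
    show "\<forall>z\<in>verts B'. \<forall>w\<in>verts B' - {z}. \<exists>b\<in>verts Q - {z}. reachable (delete_vertex B' z) w b"
    proof (intro ballI)
      fix z w assume z: "z \<in> verts B'" and w: "w \<in> verts B' - {z}"
      let ?G = "\<exists>b\<in>verts Q - {z}. reachable (delete_vertex B' z) w b"
      have ed: "{a,b} \<in> edges (delete_vertex B' z)" if "{a,b} \<in> edges B'" "a \<noteq> z" "b \<noteq> z" for a b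
        using that unfolding delete_vertex_def edges_def by auto
      have exy: "{x,y} \<in> edges B'" "{x,q} \<in> edges B'" "{y,p} \<in> edges B'" using eB' by (auto simp: insert_commute)
      have "w \<in> verts Q \<or> w = x \<or> w = y" using w vB' by auto
      moreover
      { assume "w \<in> verts Q"
        hence ?G using w reach_refl[of "delete_vertex B' z" w] by (intro bexI[of _ w]) simp_all }
      moreover
      { assume wx: "w = x"
        have ?G
        proof (cases "z = q")
          case True
          have r1: "reachable (delete_vertex B' z) x y" using ed[OF exy(1)] True d by (auto intro: reach_edge)
          have r2: "reachable (delete_vertex B' z) y p" using ed[OF exy(3)] True d by (auto intro: reach_edge)
          have "reachable (delete_vertex B' z) x p" by (rule reach_trans[OF r1 r2])
          then show ?G using wx pQ True d by (intro bexI[of _ p]) simp_all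
        next
          case False
          have "reachable (delete_vertex B' z) x q" using ed[OF exy(2)] False wx w by (auto intro: reach_edge)
          then show ?G using wx qQ False by (intro bexI[of _ q]) simp_all
        qed }
      moreover
      { assume wy: "w = y"
        have ?G
        proof (cases "z = p")
          case True
          have r1: "reachable (delete_vertex B' z) x y" using ed[OF exy(1)] True d by (auto intro: reach_edge)
          have r2: "reachable (delete_vertex B' z) x q" using ed[OF exy(2)] True d by (auto intro: reach_edge)
          have "reachable (delete_vertex B' z) y q" by (rule reach_trans[OF reach_sym[OF r1] r2])
          then show ?G using wy qQ True d by (intro bexI[of _ q]) simp_all
        next
          case False
          have "reachable (delete_vertex B' z) y p" using ed[OF exy(3)] False wy w by (auto intro: reach_edge)
          then show ?G using wy pQ False by (intro bexI[of _ p]) simp_all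
        qed }
      ultimately show "\<exists>b\<in>verts Q - {z}. reachable (delete_vertex B' z) w b" by argo
    qed
  qed
  moreover have "verts Q \<subseteq> verts B'" "edges Q \<subseteq> edges B'" using vB' eB' by auto
  ultimately have "B' = Q" using mQ sB' by blast
  thus ?thesis using eB' by auto
qed

lemma ivl_disj:
  fixes a b c d :: real
  assumes "a \<le> b" "c \<le> d"
  shows "({a..b} \<inter> {c..d} = {}) \<longleftrightarrow> (b < c \<or> d < a)"
proof
  assume h: "{a..b} \<inter> {c..d} = {}"
  show "b < c \<or> d < a"
  proof (rule ccontr)
    assume "\<not> (b < c \<or> d < a)"
    hence "max a c \<in> {a..b} \<inter> {c..d}" using assms by auto
    with h show False by simp
  qed
next
  assume "b < c \<or> d < a" thus "{a..b} \<inter> {c..d} = {}" by auto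
qed

lemma ant_ok:
  assumes bg: "block_graph G" and bl: "block G Q" and pQ: "p \<in> verts Q" and qQ: "q \<in> verts Q"
  shows "subgraph (big_ant G Q p q) G \<and> co_interval (big_ant G Q p q)"
proof -
  have gG: "graph G" using bg unfolding block_graph_def by simp
  have sQ: "subgraph Q G" using bl unfolding block_def by simp
  have cQ: "complete Q" using bg bl unfolding block_graph_def by blast
  have gQ: "graph Q" using sQ unfolding subgraph_def by simp
  have QG: "verts Q \<subseteq> verts G" "edges Q \<subseteq> edges G" using sQ unfolding subgraph_def by auto
  define VA where "VA = verts Q \<union> nbhd G p \<union> nbhd G q"
  define EA where "EA = edges Q \<union> incident G p \<union> incident G q"
  have vA: "verts (big_ant G Q p q) = VA" and eA: "edges (big_ant G Q p q) = EA"
    unfolding big_ant_def VA_def EA_def verts_def edges_def by simp_all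
  have nb: "nbhd G z \<subseteq> verts G" for z
  proof
    fix y assume "y \<in> nbhd G z"
    hence "{z,y} \<in> edges G" unfolding nbhd_def by simp
    thus "y \<in> verts G" using edge_sub[OF gG] by blast
  qed
  have VAG: "VA \<subseteq> verts G" unfolding VA_def using QG nb by blast
  have finG: "finite (verts G)" using gG unfolding graph_def by simp
  have gA: "graph (big_ant G Q p q)"
    unfolding graph_def vA eA
  proof (intro conjI ballI)
    show "finite VA" using VAG finG finite_subset by blast
    fix e assume "e \<in> EA"
    hence "e \<in> edges Q \<or> e \<in> incident G p \<or> e \<in> incident G q" unfolding EA_def by blast
    thus "\<exists>x y. x \<noteq> y \<and> e = {x, y} \<and> x \<in> VA \<and> y \<in> VA"
    proof (elim disjE)
      assume "e \<in> edges Q"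
      then obtain a b where "a \<noteq> b" "e = {a,b}" "a \<in> verts Q" "b \<in> verts Q"
        using gQ unfolding graph_def by blast
      thus ?thesis unfolding VA_def by (intro exI[of _ a] exI[of _ b]) auto
    next
      assume "e \<in> incident G p"
      hence e: "e \<in> edges G" "p \<in> e" unfolding incident_def by auto
      then obtain a b where ab: "a \<noteq> b" "e = {a,b}"
        using gG unfolding graph_def by blast
      show ?thesis
      proof (cases "a = p")
        case True
        hence "b \<in> nbhd G p" using ab e unfolding nbhd_def by simp
        thus ?thesis using ab True pQ unfolding VA_def by (intro exI[of _ a] exI[of _ b]) auto
      next
        case False
        hence "b = p" using ab e by auto
        hence "a \<in> nbhd G p" using ab e unfolding nbhd_def by (simp add: insert_commute)
        thus ?thesis using ab \<open>b = p\<close> pQ unfolding VA_def by (intro exI[of _ a] exI[of _ b]) auto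
      qed
    next
      assume "e \<in> incident G q"
      hence e: "e \<in> edges G" "q \<in> e" unfolding incident_def by auto
      then obtain a b where ab: "a \<noteq> b" "e = {a,b}"
        using gG unfolding graph_def by blast
      show ?thesis
      proof (cases "a = q")
        case True
        hence "b \<in> nbhd G q" using ab e unfolding nbhd_def by simp
        thus ?thesis using ab True qQ unfolding VA_def by (intro exI[of _ a] exI[of _ b]) auto
      next
        case False
        hence "b = q" using ab e by auto
        hence "a \<in> nbhd G q" using ab e unfolding nbhd_def by (simp add: insert_commute)
        thus ?thesis using ab \<open>b = q\<close> qQ unfolding VA_def by (intro exI[of _ a] exI[of _ b]) auto
      qed
    qed
  qed
  have EAG: "EA \<subseteq> edges G" unfolding EA_def incident_def using QG by blast
  have sub: "subgraph (big_ant G Q p q) G"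
    unfolding subgraph_def using gA vA eA VAG EAG by simp
  have char: "{x,y} \<in> EA \<longleftrightarrow> (x \<in> verts Q \<and> y \<in> verts Q) \<or> ({x,y} \<in> edges G \<and> (x = p \<or> y = p \<or> x = q \<or> y = q))"
    if "x \<noteq> y" for x y
  proof
    assume "{x,y} \<in> EA"
    thus "(x \<in> verts Q \<and> y \<in> verts Q) \<or> ({x,y} \<in> edges G \<and> (x = p \<or> y = p \<or> x = q \<or> y = q))"
      unfolding EA_def incident_def using edge_sub[OF gQ, of "{x,y}"] by auto
  next
    assume h: "(x \<in> verts Q \<and> y \<in> verts Q) \<or> ({x,y} \<in> edges G \<and> (x = p \<or> y = p \<or> x = q \<or> y = q))"
    show "{x,y} \<in> EA"
    proof (cases "x \<in> verts Q \<and> y \<in> verts Q")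
      case True
      hence "{x,y} \<in> edges Q" using cQ that unfolding Defs.complete_def by blast
      thus ?thesis unfolding EA_def by blast
    next
      case False
      thus ?thesis using h unfolding EA_def incident_def by auto
    qed
  qed
  obtain g n where gn: "g ` verts G = {i::nat. i < n}" "inj_on g (verts G)"
    using finite_imp_inj_to_nat_seg[OF finG] by blast
  define N where "N = real n"
  have gb: "real (g z) < N" if "z \<in> verts G" for z
    using gn(1) that unfolding N_def by auto
  have ginj: "g x \<noteq> g y" if "x \<in> verts G" "y \<in> verts G" "x \<noteq> y" for x y
    using gn(2) that unfolding inj_on_def by blast
  define lo where "lo z = (if z = p then N + 4 else if z = q then 0 else if z \<in> verts Q then 2 + real (g z)
      else if {q,z} \<in> edges G then 1 else 0)" for z
  define hi where "hi z = (if z = p then N + 4 else if z = q then 0 else if z \<in> verts Q then 2 + real (g z)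
      else if {p,z} \<in> edges G then N + 3 else N + 4)" for z
  have lohi: "lo z \<le> hi z" for z
    unfolding lo_def hi_def N_def by auto
  have key: "{x,y} \<in> EA \<longleftrightarrow> (hi x < lo y \<or> hi y < lo x)"
    if xy: "x \<in> VA" "y \<in> VA" "x \<noteq> y" for x y
  proof -
    have xG: "x \<in> verts G" and yG: "y \<in> verts G" using xy VAG by auto
    have bx: "real (g x) < N" and byy: "real (g y) < N" using gb xG yG by auto
    have gxy: "g x \<noteq> g y" using ginj xG yG xy by auto
    have xn: "x \<notin> verts Q \<Longrightarrow> {p,x} \<in> edges G \<or> {q,x} \<in> edges G"
      using xy(1) unfolding VA_def nbhd_def by auto
    have yn: "y \<notin> verts Q \<Longrightarrow> {p,y} \<in> edges G \<or> {q,y} \<in> edges G"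
      using xy(2) unfolding VA_def nbhd_def by auto
    show ?thesis
      unfolding char[OF xy(3)] lo_def hi_def
      using bx byy gxy xy(3) pQ qQ xn yn
      by (auto simp: insert_commute)
  qed
  have "co_interval (big_ant G Q p q)"
    unfolding co_interval_def vA eA
  proof (intro exI[of _ "\<lambda>z. {lo z..hi z}"] conjI ballI impI)
    fix x assume "x \<in> VA"
    show "\<exists>a b. a \<le> b \<and> {lo x..hi x} = {a..b}" using lohi by blast
  next
    fix x y assume "x \<in> VA" "y \<in> VA" "x \<noteq> y"
    thus "({x, y} \<in> EA) = ({lo x..hi x} \<inter> {lo y..hi y} = {})"
      using key ivl_disj[OF lohi lohi] by simp
  qed
  thus ?thesis using sub by simp
qed

theorem lemma10:
  fixes G H :: "'a graph"
  assumes "block_graph G"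
    and "edges G \<noteq> {}"
    and "max_co_interval_subgraph G H"
  shows "\<exists>Q u v. block G Q \<and> u \<in> verts Q \<and> v \<in> verts Q \<and> edges H = edges (big_ant G Q u v)"
proof -
  have bg: "block_graph G" using assms(1) .
  have gG: "graph G" using bg unfolding block_graph_def by blast
  have sH: "subgraph H G" and ciH: "co_interval H"
    and mx: "\<nexists>H'. subgraph H' G \<and> co_interval H' \<and> edges H \<subset> edges H'"
    using assms(3) unfolding max_co_interval_subgraph_def by blast+
  have gH: "graph H" and HG: "verts H \<subseteq> verts G" "edges H \<subseteq> edges G" using sH unfolding subgraph_def by blast+
  obtain I :: "'a \<Rightarrow> real set" where Ii: "\<forall>x\<in>verts H. \<exists>a b. a \<le> b \<and> I x = {a..b}"
    and Iiff: "\<forall>x\<in>verts H. \<forall>y\<in>verts H. x \<noteq> y \<longrightarrow> ({x, y} \<in> edges H \<longleftrightarrow> I x \<inter> I y = {})"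
    using ciH unfolding co_interval_def by blast
  have "edges H \<noteq> {}"
  proof
    assume E0: "edges H = {}"
    obtain e where "e \<in> edges G" using assms(2) by blast
    then obtain a b where ab: "a \<noteq> b" "e = {a,b}" "a \<in> verts G" "b \<in> verts G"
      using gG unfolding graph_def by blast
    define H' :: "'a graph" where "H' = ({a,b}, {{a,b}})"
    have gH': "graph H'" unfolding H'_def graph_def verts_def edges_def using ab by auto
    have "subgraph H' G" unfolding subgraph_def using gH' ab \<open>e \<in> edges G\<close>
      unfolding H'_def verts_def edges_def by auto
    moreover have "co_interval H'"
      unfolding co_interval_def
    proof (intro exI[of _ "\<lambda>z. if z = a then {0..0} else {1..1::real}"] conjI ballI impI)
      fix x assume "x \<in> verts H'"
      show "\<exists>c d. c \<le> d \<and> (if x = a then {0..0} else {1..1::real}) = {c..d}" by (intro exI[of _ "if x = a then 0 else (1::real)"] conjI) auto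
    next
      fix x y assume "x \<in> verts H'" "y \<in> verts H'" "x \<noteq> y"
      hence "(x = a \<and> y = b) \<or> (x = b \<and> y = a)" unfolding H'_def verts_def by auto
      thus "({x, y} \<in> edges H') = ((if x = a then {0..0} else {1..1::real}) \<inter> (if y = a then {0..0} else {1..1}) = {})"
        using ab unfolding H'_def edges_def by (auto simp: insert_commute)
    qed
    moreover have "edges H \<subset> edges H'" using E0 unfolding H'_def edges_def by auto
    ultimately show False using mx by blast
  qed
  then obtain e00 where "e00 \<in> edges H" by blast
  then obtain x0 y0 where "x0 \<noteq> y0" "e00 = {x0,y0}" "x0 \<in> verts H" "y0 \<in> verts H"
    using gH unfolding graph_def by blast
  hence e0: "{x0,y0} \<in> edges H" "x0 \<noteq> y0" "x0 \<in> verts H" "y0 \<in> verts H"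
    using \<open>e00 \<in> edges H\<close> by simp_all
  have "\<forall>x\<in>verts H. \<exists>ab. fst ab \<le> snd ab \<and> I x = {fst ab..snd ab}"
  proof
    fix x assume "x \<in> verts H"
    hence "\<exists>a b. a \<le> b \<and> I x = {a..b}" using Ii by (rule bspec[rotated])
    then obtain a b where "a \<le> b" "I x = {a..b}" by blast
    thus "\<exists>ab. fst ab \<le> snd ab \<and> I x = {fst ab..snd ab}" by (intro exI[of _ "(a,b)"]) simp
  qed
  from bchoice[OF this] obtain f where f: "\<forall>x\<in>verts H. fst (f x) \<le> snd (f x) \<and> I x = {fst (f x)..snd (f x)}"
    by (elim exE) (rule that)
  define A where "A x = fst (f x)" for x
  define B where "B x = snd (f x)" for x
  have AB: "A x \<le> B x" "I x = {A x..B x}" if "x \<in> verts H" for x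
    using f that unfolding A_def B_def by auto
  have dis: "{x,y} \<in> edges H \<longleftrightarrow> (B x < A y \<or> B y < A x)"
    if "x \<in> verts H" "y \<in> verts H" "x \<noteq> y" for x y
    using Iiff that AB[OF that(1)] AB[OF that(2)] ivl_disj[of "A x" "B x" "A y" "B y"] by auto
  have finH: "finite (verts H)" using gH unfolding graph_def by simp
  have neH: "verts H \<noteq> {}" using e0 by auto
  have "Min (B ` verts H) \<in> B ` verts H" using finH neH by simp
  then obtain p where pH: "p \<in> verts H" and pmin: "B p = Min (B ` verts H)" by (metis imageE)
  have "Max (A ` verts H) \<in> A ` verts H" using finH neH by simp
  then obtain q where qH: "q \<in> verts H" and qmax: "A q = Max (A ` verts H)" by (metis imageE)
  have pl: "B p \<le> B x" if "x \<in> verts H" for x using pmin finH that by simp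
  have qg: "A x \<le> A q" if "x \<in> verts H" for x using qmax finH that by simp
  have pq_edge: "{p,q} \<in> edges H \<and> p \<noteq> q"
  proof -
    have "B x0 < A y0 \<or> B y0 < A x0" using dis[OF e0(3) e0(4) e0(2)] e0(1) by simp
    hence "B p < A q" using pl[OF e0(3)] pl[OF e0(4)] qg[OF e0(3)] qg[OF e0(4)] by auto
    moreover have "p \<noteq> q" using AB(1)[OF pH] calculation by auto
    ultimately show ?thesis using dis[OF pH qH \<open>p \<noteq> q\<close>] by simp
  qed
  have pqG: "{p,q} \<in> edges G" using pq_edge HG by blast
  obtain Q where Q: "block G Q" "p \<in> verts Q" "q \<in> verts Q"
    using block_exists[OF gG pqG] pq_edge by blast
  have ord: "{x,y} \<in> edges (big_ant G Q p q)"
    if xy: "x \<in> verts H" "y \<in> verts H" "B x < A y" for x y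
  proof -
    have "x \<noteq> y" using xy AB(1)[OF xy(1)] by auto
    hence exy: "{x,y} \<in> edges H" using dis[OF xy(1) xy(2) \<open>x \<noteq> y\<close>] xy(3) by simp
    hence exyG: "{x,y} \<in> edges G" using HG by blast
    show ?thesis
    proof (cases "x = p \<or> y = q")
      case True
      hence "{x,y} \<in> incident G p \<or> {x,y} \<in> incident G q" using exyG unfolding incident_def by auto
      thus ?thesis unfolding big_ant_def edges_def by auto
    next
      case False
      have d1: "p \<noteq> y" using xy pl[OF xy(1)] AB(1)[OF xy(2)] by auto
      have d2: "x \<noteq> q" using xy qg[OF xy(2)] AB(1)[OF xy(1)] by auto
      have "{p,y} \<in> edges H" using dis[OF pH xy(2) d1] pl[OF xy(1)] xy(3) by auto
      hence e3: "{y,p} \<in> edges G" using HG by (auto simp: insert_commute)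
      have "{x,q} \<in> edges H" using dis[OF xy(1) qH d2] qg[OF xy(2)] xy(3) by auto
      hence e1: "{q,x} \<in> edges G" using HG by (auto simp: insert_commute)
      have "{x,y} \<in> edges Q"
      proof (rule cycle_in_block[OF gG Q(1) Q(2) Q(3)])
        show "p \<noteq> q" using pq_edge by simp
        show "p \<noteq> x" "q \<noteq> y" using False by auto
      qed (use d1 d2 \<open>x \<noteq> y\<close> e1 exyG e3 in simp_all)
      thus ?thesis unfolding big_ant_def edges_def by auto
    qed
  qed
  have sub: "edges H \<subseteq> edges (big_ant G Q p q)"
  proof
    fix e assume "e \<in> edges H"
    then obtain x y where e: "x \<noteq> y" "e = {x,y}" "x \<in> verts H" "y \<in> verts H"
      using gH unfolding graph_def by blast
    hence "B x < A y \<or> B y < A x" using dis[OF e(3) e(4) e(1)] \<open>e \<in> edges H\<close> e(2) by simp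
    thus "e \<in> edges (big_ant G Q p q)"
    proof
      assume "B x < A y" thus ?thesis using ord[OF e(3) e(4)] e(2) by simp
    next
      assume "B y < A x" thus ?thesis using ord[OF e(4) e(3)] e(2) by (simp add: insert_commute)
    qed
  qed
  have ok: "subgraph (big_ant G Q p q) G \<and> co_interval (big_ant G Q p q)"
    using ant_ok[OF bg Q] .
  have "\<not> edges H \<subset> edges (big_ant G Q p q)" using ok mx by blast
  hence "edges H = edges (big_ant G Q p q)"
    using sub by blast
  thus ?thesis using Q by blast
qed

end
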